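(* Let $\mathcal H$ be an index set (possibly uncountably infinite). For each $h\in\mathcal H$ let $X_1(h),X_2(h),\dots$ be real random variables, and let $\mathcal T_t=\{X_\tau(h)\}_{1\le\tau\le t,\,h\in\mathcal H}$ denote everything observed up to time $t$. Assume $\mathbb E[X_t(h)\mid\mathcal T_{t-1}]=0$ for all $t,h$ (the variables $X_t(h)$ for different $h$ need not be independent), and $|X_t(h)|\le C$ for all $t,h$. Let $M_t(h)=\sum_{\tau=1}^t X_\tau(h)$ and $V_t(h)=\sum_{\tau=1}^t\mathbb E[X_\tau(h)^2\mid\mathcal T_{\tau-1}]$, and for a distribution $\rho$ on $\mathcal H$ let $M_t(\rho)=\mathbb E_{\rho(h)}[M_t(h)]$, $V_t(\rho)=\mathbb E_{\rho(h)}[V_t(h)]$. Let $\delta\in(0,1)$ and $L_t=2\ln(t+1)+\ln\frac{2}{\delta}$. Let $\mu_1,\mu_2,\dots$ be "reference" (prior) distributions on $\mathcal H$ such that $\mu_t$ is independent of $\mathcal T_t$ (it may depend on $t$), and let $\bar V_1,\bar V_2,\dots$ be positive numbers such that $\bar V_t$ is independent of $\mathcal T_t$ (it may depend on $t$) and $$\sqrt{\frac{L_t}{(e-2)\bar V_t}}\le\frac1C\quad\text{for all }t.$$ Then with probability at least $1-\delta$, simultaneously for all $t\ge1$ and all distributions $\rho_t$ on $\mathcal H$ (which may depend on the observations), $$|M_t(\rho_t)|\le\sqrt{e-2}\left(KL(\rho_t\|\mu_t)\sqrt{\frac{\bar V_t}{L_t}}+V_t(\rho_t)\sqrt{\frac{L_t}{\bar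 V_t}}+\sqrt{L_t\bar V_t}\right).$$
   Context: $KL(\rho\|\mu)=\mathbb E_{\rho(h)}[\ln\frac{\rho(h)}{\mu(h)}]$ is the Kullback–Leibler divergence. "Independent of $\mathcal T_t$" means the object is chosen without reference to the observed random variables (e.g., fixed in advance as a function of $t$). *)

theory Defs
  imports "HOL-Probability.Probability"
begin

definition obs_filtration ::
  "'a measure \<Rightarrow> 'h measure \<Rightarrow> (nat \<Rightarrow> 'h \<Rightarrow> 'a \<Rightarrow> real) \<Rightarrow> nat \<Rightarrow> 'a measure" where
  "obs_filtration M H X t =
     sigma (space M) {X \<tau> h -` B \<inter> space M | \<tau> h B. 1 \<le> \<tau> \<and> \<tau> \<le> t \<and> h \<in> space H \<and> B \<in> sets borel}"

definition KL :: "'h measure \<Rightarrow> 'h measure \<Rightarrow> ereal" where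
  "KL \<rho> \<mu> =
     (if absolutely_continuous \<mu> \<rho> \<and> integrable \<rho> (\<lambda>h. ln (enn2real (RN_deriv \<mu> \<rho> h)))
      then ereal (\<integral>h. ln (enn2real (RN_deriv \<mu> \<rho> h)) \<partial>\<rho>)
      else \<infinity>)"

end

theory Submission
  imports Defs
begin


lemma exp_le_quad:
  fixes x :: real
  assumes "\<bar>x\<bar> \<le> 1"
  shows "exp x \<le> 1 + x + (exp 1 - 2) * x\<^sup>2"
proof -
  have s1: "summable (\<lambda>n. inverse (fact (n + 2)) * x ^ (n + 2) :: real)"
    by (rule summable_exp [THEN summable_ignore_initial_segment])
  have s2: "summable (\<lambda>n. inverse (fact (n + 2)) * (1::real) ^ (n + 2))"
    by (rule summable_exp [THEN summable_ignore_initial_segment])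
  have "suminf (\<lambda>n. inverse (fact (n + 2)) * x ^ (n + 2)) \<le> suminf (\<lambda>n. x\<^sup>2 * (inverse (fact (n + 2)) * (1::real) ^ (n + 2)))"
  proof (intro suminf_le allI)
    fix n :: nat
    have "x ^ (n+2) \<le> \<bar>x\<bar>^n * x\<^sup>2"
      by (metis abs_ge_self abs_power_minus power_abs power_add power2_abs abs_mult order_trans abs_of_nonneg zero_le_power2)
    also have "\<dots> \<le> x\<^sup>2" using assms by (intro mult_left_le_one_le) (auto intro: power_le_one)
    finally show "inverse (fact (n + 2)) * x ^ (n + 2) \<le> x\<^sup>2 * (inverse (fact (n + 2)) * (1::real) ^ (n + 2))"
      by (simp add: mult_left_mono mult.commute)
    show "summable (\<lambda>n. inverse (fact (n + 2)) * x ^ (n + 2))" by (rule s1)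
    show "summable (\<lambda>n. x\<^sup>2 * (inverse (fact (n + 2)) * (1::real) ^ (n + 2)))"
      by (intro summable_mult s2)
  qed
  also have "\<dots> = x\<^sup>2 * suminf (\<lambda>n. inverse (fact (n + 2)) * (1::real) ^ (n + 2))"
    by (intro suminf_mult s2)
  also have "suminf (\<lambda>n. inverse (fact (n + 2)) * (1::real) ^ (n + 2)) = exp 1 - 2"
    using exp_first_two_terms[of "1::real"] by simp
  finally show ?thesis
    unfolding exp_first_two_terms[of x] by (simp add: mult.commute)
qed

locale pacb = prob_space M for M :: "'a measure" +
  fixes H :: "'h measure"
    and X :: "nat \<Rightarrow> 'h \<Rightarrow> 'a \<Rightarrow> real"
    and CV :: "nat \<Rightarrow> 'h \<Rightarrow> 'a \<Rightarrow> real"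
    and C :: real
  assumes X_meas: "\<And>t. t \<ge> 1 \<Longrightarrow> (\<lambda>(h, \<omega>). X t h \<omega>) \<in> borel_measurable (H \<Otimes>\<^sub>M M)"
    and X_bound: "\<And>t h \<omega>. t \<ge> 1 \<Longrightarrow> h \<in> space H \<Longrightarrow> \<omega> \<in> space M \<Longrightarrow> \<bar>X t h \<omega>\<bar> \<le> C"
    and X_mart: "\<And>t h. t \<ge> 1 \<Longrightarrow> h \<in> space H \<Longrightarrow>
        AE \<omega> in M. real_cond_exp M (obs_filtration M H X (t - 1)) (X t h) \<omega> = 0"
    and CV_meas: "\<And>t. t \<ge> 1 \<Longrightarrow> (\<lambda>(h, \<omega>). CV t h \<omega>) \<in> borel_measurable (H \<Otimes>\<^sub>M M)"
    and CV_version: "\<And>t h. t \<ge> 1 \<Longrightarrow> h \<in> space H \<Longrightarrow>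
        AE \<omega> in M. CV t h \<omega> =
          real_cond_exp M (obs_filtration M H X (t - 1)) (\<lambda>\<omega>. (X t h \<omega>)\<^sup>2) \<omega>"
begin

abbreviation "F t \<equiv> obs_filtration M H X t"

definition "gens t = {X \<tau> h -` B \<inter> space M | \<tau> h B. 1 \<le> \<tau> \<and> \<tau> \<le> t \<and> h \<in> space H \<and> B \<in> sets borel}"

lemma gens_Pow: "gens t \<subseteq> Pow (space M)"
  unfolding gens_def by auto

lemma F_eq: "F t = sigma (space M) (gens t)"
  unfolding obs_filtration_def gens_def by simp

lemma space_F[simp]: "space (F t) = space M"
  unfolding F_eq using gens_Pow by simp

lemma sets_F: "sets (F t) = sigma_sets (space M) (gens t)"
  unfolding F_eq using gens_Pow by simp

lemma X_meas1:
  assumes "t \<ge> 1" "h \<in> space H"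
  shows "X t h \<in> borel_measurable M"
proof -
  have "(\<lambda>\<omega>. (\<lambda>(h, \<omega>). X t h \<omega>) (h, \<omega>)) \<in> borel_measurable M"
    by (rule measurable_compose[OF measurable_Pair1'[OF assms(2)] X_meas[OF assms(1)]])
  then show ?thesis by simp
qed

lemma CV_meas1:
  assumes "t \<ge> 1" "h \<in> space H"
  shows "CV t h \<in> borel_measurable M"
proof -
  have "(\<lambda>\<omega>. (\<lambda>(h, \<omega>). CV t h \<omega>) (h, \<omega>)) \<in> borel_measurable M"
    by (rule measurable_compose[OF measurable_Pair1'[OF assms(2)] CV_meas[OF assms(1)]])
  then show ?thesis by simp
qed

lemma gens_sets: "gens t \<subseteq> sets M"
  unfolding gens_def using X_meas1 by (auto simp: measurable_sets)

lemma subalg_F: "subalgebra M (F t)"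
  unfolding subalgebra_def sets_F
  using sets.sigma_sets_subset[OF gens_sets] by simp

lemma subalg_FF: assumes "s \<le> t" shows "subalgebra (F t) (F s)"
  unfolding subalgebra_def sets_F
proof (intro conjI sigma_sets_mono')
  show "gens s \<subseteq> gens t" using assms unfolding gens_def by (blast intro: le_trans)
qed simp

lemma sfs_F: "sigma_finite_subalgebra M (F t)"
  by (intro finite_measure_subalgebra_is_sigma_finite)
     (simp add: finite_measure_subalgebra_def finite_measure_subalgebra_axioms_def subalg_F finite_measure_axioms)

lemma X_measF:
  assumes "1 \<le> \<tau>" "\<tau> \<le> t" "h \<in> space H"
  shows "X \<tau> h \<in> borel_measurable (F t)"
proof (rule measurableI)
  fix B :: "real set" assume "B \<in> sets borel"
  then have "X \<tau> h -` B \<inter> space M \<in> gens t" unfolding gens_def using assms by blast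
  then show "X \<tau> h -` B \<inter> space (F t) \<in> sets (F t)"
    unfolding sets_F by auto
qed simp

lemma measF_mono: "f \<in> borel_measurable (F s) \<Longrightarrow> s \<le> t \<Longrightarrow> f \<in> borel_measurable (F t)"
  by (rule measurable_from_subalg[OF subalg_FF])

lemma mul_le_absC:
  fixes lam x D :: real
  assumes "\<bar>x\<bar> \<le> D"
  shows "lam * x \<le> \<bar>lam\<bar> * D"
proof -
  have "lam * x \<le> \<bar>lam * x\<bar>" by simp
  also have "\<dots> = \<bar>lam\<bar> * \<bar>x\<bar>" by (simp add: abs_mult)
  also have "\<dots> \<le> \<bar>lam\<bar> * D" by (rule mult_left_mono) (use assms in simp_all)
  finally show ?thesis .
qed

lemma bdd_integrable:
  fixes f :: "'a \<Rightarrow> real"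
  assumes "f \<in> borel_measurable M" "\<And>\<omega>. \<omega> \<in> space M \<Longrightarrow> \<bar>f \<omega>\<bar> \<le> B"
  shows "integrable M f"
  using assms by (intro integrable_const_bound[where B=B]) auto

definition "ce t h = real_cond_exp M (F (t-1)) (\<lambda>\<omega>. (X t h \<omega>)\<^sup>2)"
definition "cc t h \<omega> = max 0 (min (C\<^sup>2) (ce t h \<omega>))"
definition "Z lam h t \<omega> = exp (\<Sum>\<tau>\<in>{1..t}. lam * X \<tau> h \<omega> - (exp 1 - 2) * lam\<^sup>2 * cc \<tau> h \<omega>)"

lemma cc_bounds: "0 \<le> cc t h \<omega>" "cc t h \<omega> \<le> C\<^sup>2"
  unfolding cc_def by auto

lemma cc_meas: "cc t h \<in> borel_measurable (F (t-1))"
proof -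
  interpret S: sigma_finite_subalgebra M "F (t-1)" by (rule sfs_F)
  show ?thesis unfolding cc_def ce_def by measurable
qed

lemma C_nonneg: "h \<in> space H \<Longrightarrow> 0 \<le> C"
  using X_bound[of 1 h] not_empty by fastforce

lemma Xsq_bound: "t \<ge> 1 \<Longrightarrow> h \<in> space H \<Longrightarrow> \<omega> \<in> space M \<Longrightarrow> (X t h \<omega>)\<^sup>2 \<le> C\<^sup>2"
  using X_bound[of t h \<omega>] by (metis abs_ge_zero power2_abs power_mono)

lemma ce_cc_AE:
  assumes "t \<ge> 1" "h \<in> space H"
  shows "AE \<omega> in M. ce t h \<omega> = cc t h \<omega>"
proof -
  interpret S: sigma_finite_subalgebra M "F (t-1)" by (rule sfs_F)
  have m[measurable]: "X t h \<in> borel_measurable M" using X_meas1 assms by auto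
  have i: "integrable M (\<lambda>\<omega>. (X t h \<omega>)\<^sup>2)"
    by (rule bdd_integrable[where B="C\<^sup>2"]) (use Xsq_bound assms in auto)
  have "AE \<omega> in M. ce t h \<omega> \<ge> 0" unfolding ce_def
    by (intro S.real_cond_exp_pos) auto
  moreover have "AE \<omega> in M. ce t h \<omega> \<le> C\<^sup>2" unfolding ce_def
    by (intro S.real_cond_exp_le_c i AE_I2) (use Xsq_bound assms in auto)
  ultimately show ?thesis by eventually_elim (auto simp: cc_def)
qed

lemma Z_meas:
  assumes "h \<in> space H"
  shows "Z lam h t \<in> borel_measurable (F t)"
proof -
  have [measurable]: "(\<lambda>\<omega>. \<Sum>\<tau>\<in>{1..t}. lam * X \<tau> h \<omega> - (exp 1 - 2) * lam\<^sup>2 * cc \<tau> h \<omega>) \<in> borel_measurable (F t)"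
  proof (rule borel_measurable_sum)
    fix \<tau> assume "\<tau> \<in> {1..t}"
    then have [measurable]: "X \<tau> h \<in> borel_measurable (F t)" "cc \<tau> h \<in> borel_measurable (F t)"
      using X_measF assms measF_mono[OF cc_meas[of \<tau> h], of t] by auto
    show "(\<lambda>\<omega>. lam * X \<tau> h \<omega> - (exp 1 - 2) * lam\<^sup>2 * cc \<tau> h \<omega>) \<in> borel_measurable (F t)"
      by measurable
  qed
  show ?thesis unfolding Z_def by measurable
qed

lemma Z_bound:
  assumes "h \<in> space H" "\<omega> \<in> space M"
  shows "0 < Z lam h t \<omega>" "Z lam h t \<omega> \<le> exp (real t * (\<bar>lam\<bar> * C + (exp 1 - 2) * lam\<^sup>2 * C\<^sup>2))"
proof -
  show "0 < Z lam h t \<omega>" unfolding Z_def by simp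
  have e2: "0 \<le> exp 1 - (2::real)" using exp_ge_add_one_self[of 1] by simp
  have "(\<Sum>\<tau>\<in>{1..t}. lam * X \<tau> h \<omega> - (exp 1 - 2) * lam\<^sup>2 * cc \<tau> h \<omega>)
      \<le> (\<Sum>\<tau>\<in>{1..t}. \<bar>lam\<bar> * C + (exp 1 - 2) * lam\<^sup>2 * C\<^sup>2)"
  proof (intro sum_mono)
    fix \<tau> assume "\<tau> \<in> {1..t}"
    then have "\<bar>X \<tau> h \<omega>\<bar> \<le> C" using X_bound assms by auto
    then have "lam * X \<tau> h \<omega> \<le> \<bar>lam\<bar> * C" by (rule mul_le_absC)
    moreover have "0 \<le> (exp 1 - 2) * lam\<^sup>2 * C\<^sup>2" using e2 by simp
    moreover have "0 \<le> (exp 1 - 2) * lam\<^sup>2 * cc \<tau> h \<omega>" using e2 cc_bounds by simp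
    ultimately show "lam * X \<tau> h \<omega> - (exp 1 - 2) * lam\<^sup>2 * cc \<tau> h \<omega> \<le> \<bar>lam\<bar> * C + (exp 1 - 2) * lam\<^sup>2 * C\<^sup>2"
      by linarith
  qed
  then show "Z lam h t \<omega> \<le> exp (real t * (\<bar>lam\<bar> * C + (exp 1 - 2) * lam\<^sup>2 * C\<^sup>2))"
    unfolding Z_def by simp
qed

lemma Z_int:
  assumes h: "h \<in> space H" and lamC: "\<bar>lam\<bar> * C \<le> 1"
  shows "integral\<^sup>L M (Z lam h t) \<le> 1"
proof (induction t)
  case 0
  then show ?case by (simp add: Z_def)
next
  case (Suc t)
  define a where "a = (exp 1 - 2) * lam\<^sup>2"
  have e2: "0 \<le> exp 1 - (2::real)" using exp_ge_add_one_self[of 1] by simp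
  have a0: "0 \<le> a" unfolding a_def using e2 by simp
  define K where "K = exp (real t * (\<bar>lam\<bar> * C + (exp 1 - 2) * lam\<^sup>2 * C\<^sup>2))"
  define W where "W \<omega> = Z lam h t \<omega> * exp (- a * cc (Suc t) h \<omega>)" for \<omega>
  interpret S: sigma_finite_subalgebra M "F t" by (rule sfs_F)
  have C0: "0 \<le> C" using C_nonneg h .
  have WF[measurable]: "W \<in> borel_measurable (F t)"
  proof -
    have [measurable]: "Z lam h t \<in> borel_measurable (F t)" using Z_meas h .
    have [measurable]: "cc (Suc t) h \<in> borel_measurable (F t)" using cc_meas[of "Suc t" h] by simp
    show ?thesis unfolding W_def by measurable
  qed
  have WM[measurable]: "W \<in> borel_measurable M" by (rule measurable_from_subalg[OF subalg_F WF])
  have XM[measurable]: "X (Suc t) h \<in> borel_measurable M" using X_meas1 h by auto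
  have ccM[measurable]: "cc (Suc t) h \<in> borel_measurable M"
    using measurable_from_subalg[OF subalg_F cc_meas[of "Suc t" h]] by simp
  have ZM[measurable]: "Z lam h t \<in> borel_measurable M"
    by (rule measurable_from_subalg[OF subalg_F Z_meas[OF h]])
  have Wb: "0 \<le> W \<omega>" "W \<omega> \<le> K" if "\<omega> \<in> space M" for \<omega>
  proof -
    have "exp (- a * cc (Suc t) h \<omega>) \<le> 1" using a0 cc_bounds[of "Suc t" h \<omega>] by (simp add: mult_nonneg_nonneg)
    then have "W \<omega> \<le> Z lam h t \<omega> * 1" unfolding W_def
      using Z_bound(1)[OF h that, of lam t] by (intro mult_left_mono) auto
    then show "W \<omega> \<le> K" using Z_bound(2)[OF h that, of lam t] unfolding K_def by simp
    show "0 \<le> W \<omega>" using Z_bound[OF h that, of lam t] unfolding W_def by simp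
  qed
  have K0: "0 \<le> K" unfolding K_def by simp
  have Xb: "\<bar>X (Suc t) h \<omega>\<bar> \<le> C" if "\<omega> \<in> space M" for \<omega> using X_bound h that by auto
  have iW: "integrable M W" by (rule bdd_integrable[where B=K]) (use Wb in auto)
  have iWX: "integrable M (\<lambda>\<omega>. W \<omega> * X (Suc t) h \<omega>)"
    by (rule bdd_integrable[where B="K*C"]) (use Wb Xb K0 in \<open>auto simp: abs_mult intro!: mult_mono\<close>)
  have iWX2: "integrable M (\<lambda>\<omega>. W \<omega> * (X (Suc t) h \<omega>)\<^sup>2)"
    by (rule bdd_integrable[where B="K*C\<^sup>2"]) (use Wb Xsq_bound h K0 in \<open>auto simp: abs_mult intro!: mult_mono\<close>)
  have iWc: "integrable M (\<lambda>\<omega>. W \<omega> * cc (Suc t) h \<omega>)"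
    by (rule bdd_integrable[where B="K*C\<^sup>2"]) (use Wb cc_bounds K0 in \<open>auto simp: abs_mult intro!: mult_mono\<close>)
  have iWe: "integrable M (\<lambda>\<omega>. W \<omega> * exp (lam * X (Suc t) h \<omega>))"
  proof (rule bdd_integrable[where B="K*exp(\<bar>lam\<bar>*C)"])
    show "(\<lambda>\<omega>. W \<omega> * exp (lam * X (Suc t) h \<omega>)) \<in> borel_measurable M" by measurable
    fix \<omega> assume \<omega>: "\<omega> \<in> space M"
    have "lam * X (Suc t) h \<omega> \<le> \<bar>lam\<bar> * C" using Xb[OF \<omega>] by (rule mul_le_absC)
    then have "exp (lam * X (Suc t) h \<omega>) \<le> exp (\<bar>lam\<bar> * C)" by simp
    then show "\<bar>W \<omega> * exp (lam * X (Suc t) h \<omega>)\<bar> \<le> K * exp (\<bar>lam\<bar> * C)"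
      using Wb[OF \<omega>] by (auto simp: abs_mult intro!: mult_mono)
  qed
  have iZ: "integrable M (Z lam h t)"
  proof (rule bdd_integrable[where B=K])
    show "Z lam h t \<in> borel_measurable M" by measurable
    fix \<omega> assume \<omega>: "\<omega> \<in> space M"
    show "\<bar>Z lam h t \<omega>\<bar> \<le> K" using Z_bound[OF h \<omega>, of lam t] unfolding K_def by simp
  qed
  have I1: "(\<integral>\<omega>. W \<omega> * X (Suc t) h \<omega> \<partial>M) = 0"
  proof -
    have "(\<integral>\<omega>. W \<omega> * X (Suc t) h \<omega> \<partial>M) = (\<integral>\<omega>. W \<omega> * real_cond_exp M (F t) (X (Suc t) h) \<omega> \<partial>M)"
      by (rule S.real_cond_exp_intg(2)[symmetric]) (use iWX in auto)
    also have "\<dots> = (\<integral>\<omega>. 0 \<partial>M)"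
      using X_mart[of "Suc t" h] h by (intro integral_cong_AE) (auto elim!: eventually_mono)
    finally show ?thesis by simp
  qed
  have I2: "(\<integral>\<omega>. W \<omega> * (X (Suc t) h \<omega>)\<^sup>2 \<partial>M) = (\<integral>\<omega>. W \<omega> * cc (Suc t) h \<omega> \<partial>M)"
  proof -
    have "(\<integral>\<omega>. W \<omega> * (X (Suc t) h \<omega>)\<^sup>2 \<partial>M) = (\<integral>\<omega>. W \<omega> * real_cond_exp M (F t) (\<lambda>\<omega>. (X (Suc t) h \<omega>)\<^sup>2) \<omega> \<partial>M)"
      by (rule S.real_cond_exp_intg(2)[symmetric]) (use iWX2 in auto)
    also have "\<dots> = (\<integral>\<omega>. W \<omega> * cc (Suc t) h \<omega> \<partial>M)"
      using ce_cc_AE[of "Suc t" h] h by (intro integral_cong_AE) (auto simp: ce_def elim!: eventually_mono)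
    finally show ?thesis .
  qed
  have ZS: "Z lam h (Suc t) \<omega> = W \<omega> * exp (lam * X (Suc t) h \<omega>)" for \<omega>
    unfolding Z_def W_def a_def by (simp add: exp_add exp_diff exp_minus field_simps)
  have "integral\<^sup>L M (Z lam h (Suc t)) = (\<integral>\<omega>. W \<omega> * exp (lam * X (Suc t) h \<omega>) \<partial>M)"
    by (simp only: fun_eq_iff[THEN iffD2, OF allI, OF ZS])
  also have "\<dots> \<le> (\<integral>\<omega>. W \<omega> + lam * (W \<omega> * X (Suc t) h \<omega>) + a * (W \<omega> * (X (Suc t) h \<omega>)\<^sup>2) \<partial>M)"
  proof (rule integral_mono[OF iWe])
    show "integrable M (\<lambda>\<omega>. W \<omega> + lam * (W \<omega> * X (Suc t) h \<omega>) + a * (W \<omega> * (X (Suc t) h \<omega>)\<^sup>2))"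
      using iW iWX iWX2 by auto
    fix \<omega> assume \<omega>: "\<omega> \<in> space M"
    have "\<bar>lam * X (Suc t) h \<omega>\<bar> \<le> 1"
      using mult_mono[OF order.refl Xb[OF \<omega>], of "\<bar>lam\<bar>"] lamC by (simp add: abs_mult)
    from exp_le_quad[OF this] have "exp (lam * X (Suc t) h \<omega>) \<le> 1 + lam * X (Suc t) h \<omega> + a * (X (Suc t) h \<omega>)\<^sup>2"
      unfolding a_def by (simp add: power_mult_distrib)
    from mult_left_mono[OF this Wb(1)[OF \<omega>]]
    show "W \<omega> * exp (lam * X (Suc t) h \<omega>) \<le> W \<omega> + lam * (W \<omega> * X (Suc t) h \<omega>) + a * (W \<omega> * (X (Suc t) h \<omega>)\<^sup>2)"
      by (simp add: algebra_simps)
  qed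
  also have "\<dots> = integral\<^sup>L M W + lam * 0 + a * (\<integral>\<omega>. W \<omega> * cc (Suc t) h \<omega> \<partial>M)"
    using iW iWX iWX2 I1 I2 by simp
  also have "\<dots> = (\<integral>\<omega>. Z lam h t \<omega> * (exp (- a * cc (Suc t) h \<omega>) * (1 + a * cc (Suc t) h \<omega>)) \<partial>M)"
    using iW iWc unfolding W_def by (simp add: algebra_simps)
  also have "\<dots> \<le> integral\<^sup>L M (Z lam h t)"
  proof (rule integral_mono[OF _ iZ])
    show "integrable M (\<lambda>\<omega>. Z lam h t \<omega> * (exp (- a * cc (Suc t) h \<omega>) * (1 + a * cc (Suc t) h \<omega>)))"
      using iW iWc unfolding W_def by (simp add: algebra_simps)
    fix \<omega> assume \<omega>: "\<omega> \<in> space M"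
    have "1 + a * cc (Suc t) h \<omega> \<le> exp (a * cc (Suc t) h \<omega>)" by (rule exp_ge_add_one_self)
    then have "exp (- a * cc (Suc t) h \<omega>) * (1 + a * cc (Suc t) h \<omega>) \<le> 1"
      by (simp add: exp_minus field_simps)
    from mult_left_mono[OF this] Z_bound(1)[OF h \<omega>, of lam t]
    show "Z lam h t \<omega> * (exp (- a * cc (Suc t) h \<omega>) * (1 + a * cc (Suc t) h \<omega>)) \<le> Z lam h t \<omega>"
      by simp
  qed
  also have "\<dots> \<le> 1" by (rule Suc.IH)
  finally show ?case .
qed

lemma Z_integrable:
  assumes h: "h \<in> space H"
  shows "integrable M (Z lam h t)"
proof (rule bdd_integrable[where B="exp (real t * (\<bar>lam\<bar> * C + (exp 1 - 2) * lam\<^sup>2 * C\<^sup>2))"])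
  show "Z lam h t \<in> borel_measurable M"
    by (rule measurable_from_subalg[OF subalg_F Z_meas[OF h]])
  fix \<omega> assume \<omega>: "\<omega> \<in> space M"
  show "\<bar>Z lam h t \<omega>\<bar> \<le> exp (real t * (\<bar>lam\<bar> * C + (exp 1 - 2) * lam\<^sup>2 * C\<^sup>2))"
    using Z_bound[OF h \<omega>, of lam t] by simp
qed

definition "SS t h \<omega> = (\<Sum>\<tau> = 1..t. X \<tau> h \<omega>)"
definition "VV t h \<omega> = (\<Sum>\<tau> = 1..t. CV \<tau> h \<omega>)"
definition "G lam t h \<omega> = exp (lam * SS t h \<omega> - (exp 1 - 2) * lam\<^sup>2 * VV t h \<omega>)"

lemma CV_cc_AE:
  assumes "h \<in> space H"
  shows "AE \<omega> in M. \<forall>\<tau>\<in>{1..t}. CV \<tau> h \<omega> = cc \<tau> h \<omega>"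
proof (rule AE_finite_allI)
  fix \<tau> assume "\<tau> \<in> {1..t}"
  then have "\<tau> \<ge> 1" by auto
  show "AE \<omega> in M. CV \<tau> h \<omega> = cc \<tau> h \<omega>"
    using CV_version[OF \<open>\<tau> \<ge> 1\<close> assms] ce_cc_AE[OF \<open>\<tau> \<ge> 1\<close> assms]
    by eventually_elim (simp add: ce_def)
qed simp

lemma G_Z_AE:
  assumes "h \<in> space H"
  shows "AE \<omega> in M. G lam t h \<omega> = Z lam h t \<omega>"
  using CV_cc_AE[OF assms, of t]
proof eventually_elim
  case (elim \<omega>)
  then have "VV t h \<omega> = (\<Sum>\<tau> = 1..t. cc \<tau> h \<omega>)" unfolding VV_def by (intro sum.cong) auto
  then show ?case unfolding G_def Z_def SS_def
    by (simp add: sum_subtractf sum_distrib_left)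
qed

lemma G_nn:
  assumes h: "h \<in> space H" and lamC: "\<bar>lam\<bar> * C \<le> 1"
  shows "(\<integral>\<^sup>+\<omega>. ennreal (G lam t h \<omega>) \<partial>M) \<le> 1"
proof -
  have "(\<integral>\<^sup>+\<omega>. ennreal (G lam t h \<omega>) \<partial>M) = (\<integral>\<^sup>+\<omega>. ennreal (Z lam h t \<omega>) \<partial>M)"
    using G_Z_AE[OF h, of lam t] by (intro nn_integral_cong_AE) (auto elim!: eventually_mono)
  also have "\<dots> = ennreal (integral\<^sup>L M (Z lam h t))"
    by (intro nn_integral_eq_integral Z_integrable[OF h] AE_I2 less_imp_le Z_bound(1)[OF h])
  also have "\<dots> \<le> 1" using Z_int[OF h lamC, of t] by simp
  finally show ?thesis .
qed

lemma prod_meas_sum: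
  assumes "\<And>\<tau>. \<tau> \<ge> 1 \<Longrightarrow> (\<lambda>(h, \<omega>). Y \<tau> h \<omega>) \<in> borel_measurable (H \<Otimes>\<^sub>M M)"
  shows "(\<lambda>(h, \<omega>). (\<Sum>\<tau> = 1..t. Y \<tau> h \<omega>) :: real) \<in> borel_measurable (H \<Otimes>\<^sub>M M)"
proof -
  have "(\<lambda>x. (\<Sum>\<tau> = 1..t. (\<lambda>(h, \<omega>). Y \<tau> h \<omega>) x)) \<in> borel_measurable (H \<Otimes>\<^sub>M M)"
    by (rule borel_measurable_sum) (use assms in auto)
  then show ?thesis by (simp add: case_prod_beta')
qed

lemma G_meas: "(\<lambda>(h, \<omega>). G lam t h \<omega>) \<in> borel_measurable (H \<Otimes>\<^sub>M M)"
proof -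
  have [measurable]: "(\<lambda>x. SS t (fst x) (snd x)) \<in> borel_measurable (H \<Otimes>\<^sub>M M)"
    using prod_meas_sum[of X t] X_meas unfolding SS_def by (simp add: case_prod_beta')
  have [measurable]: "(\<lambda>x. VV t (fst x) (snd x)) \<in> borel_measurable (H \<Otimes>\<^sub>M M)"
    using prod_meas_sum[of CV t] CV_meas unfolding VV_def by (simp add: case_prod_beta')
  have "(\<lambda>x. G lam t (fst x) (snd x)) \<in> borel_measurable (H \<Otimes>\<^sub>M M)"
    unfolding G_def by measurable
  then show ?thesis by (simp add: case_prod_beta')
qed

lemma meas_congH:
  fixes f :: "'h \<times> 'a \<Rightarrow> real"
  assumes "sets N = sets H" "f \<in> borel_measurable (H \<Otimes>\<^sub>M M)"
  shows "f \<in> borel_measurable (N \<Otimes>\<^sub>M M)"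
proof -
  have e: "sets (N \<Otimes>\<^sub>M M) = sets (H \<Otimes>\<^sub>M M)" by (rule sets_pair_measure_cong) (simp_all add: assms)
  show ?thesis unfolding measurable_cong_sets[OF e refl] by (rule assms(2))
qed

lemma fubini_bound:
  assumes N: "prob_space N" "sets N = sets H" and lamC: "\<bar>lam\<bar> * C \<le> 1"
  shows "(\<integral>\<^sup>+\<omega>. (\<integral>\<^sup>+h. ennreal (G lam t h \<omega>) \<partial>N) \<partial>M) \<le> 1"
proof -
  interpret N: prob_space N by (rule N(1))
  interpret P: pair_sigma_finite N M by unfold_locales
  have sp: "space N = space H" using sets_eq_imp_space_eq[OF N(2)] .
  have m: "(\<lambda>(h, \<omega>). ennreal (G lam t h \<omega>)) \<in> borel_measurable (N \<Otimes>\<^sub>M M)"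
    using meas_congH[OF N(2) G_meas[of lam t]] by measurable
  have "(\<integral>\<^sup>+\<omega>. (\<integral>\<^sup>+h. ennreal (G lam t h \<omega>) \<partial>N) \<partial>M) = (\<integral>\<^sup>+h. (\<integral>\<^sup>+\<omega>. ennreal (G lam t h \<omega>) \<partial>M) \<partial>N)"
    by (rule P.Fubini'[OF m])
  also have "\<dots> \<le> (\<integral>\<^sup>+h. 1 \<partial>N)"
    by (intro nn_integral_mono G_nn lamC) (simp add: sp)
  also have "\<dots> = 1" by (simp add: N.emeasure_space_1)
  finally show ?thesis .
qed

lemma Phi_meas:
  assumes N: "prob_space N" "sets N = sets H"
  shows "(\<lambda>\<omega>. \<integral>\<^sup>+h. ennreal (G lam t h \<omega>) \<partial>N) \<in> borel_measurable M"
proof -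
  interpret N: prob_space N by (rule N(1))
  have m: "(\<lambda>(h, \<omega>). G lam t h \<omega>) \<in> borel_measurable (N \<Otimes>\<^sub>M M)"
    using meas_congH[OF N(2) G_meas[of lam t]] .
  have "(\<lambda>x. (\<lambda>(h, \<omega>). G lam t h \<omega>) ((\<lambda>(x,y). (y,x)) x)) \<in> borel_measurable (M \<Otimes>\<^sub>M N)"
    by (rule measurable_compose[OF measurable_pair_swap' m])
  then have "(\<lambda>(\<omega>, h). ennreal (G lam t h \<omega>)) \<in> borel_measurable (M \<Otimes>\<^sub>M N)"
    by (simp add: case_prod_beta')
  then show ?thesis by (rule N.borel_measurable_nn_integral)
qed

end


lemma RN_mult_le:
  fixes r :: ennreal and e :: real
  assumes "0 \<le> e"
  shows "r * ennreal (e / enn2real r) \<le> ennreal e"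
proof (cases r)
  case (real x)
  show ?thesis
  proof (cases "x = 0")
    case True then show ?thesis using real by simp
  next
    case False
    then have "x > 0" using real by simp
    then have "ennreal x * ennreal (e / x) = ennreal (x * (e / x))"
      using assms by (subst ennreal_mult[symmetric]) auto
    also have "\<dots> = ennreal e" using \<open>x > 0\<close> by simp
    finally show ?thesis using real by simp
  qed
next
  case top then show ?thesis by simp
qed

lemma DV:
  fixes \<mu> \<rho> :: "'h measure" and f :: "'h \<Rightarrow> real" and K :: real
  assumes mu: "prob_space \<mu>" and rho: "prob_space \<rho>" and sets: "sets \<rho> = sets \<mu>"
    and ac: "absolutely_continuous \<mu> \<rho>"
    and iln: "integrable \<rho> (\<lambda>h. ln (enn2real (RN_deriv \<mu> \<rho> h)))"
    and fm: "f \<in> borel_measurable \<mu>" and fi: "integrable \<rho> f"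
    and Kb: "(\<integral>\<^sup>+h. ennreal (exp (f h)) \<partial>\<mu>) \<le> ennreal K"
  shows "(\<integral>h. f h \<partial>\<rho>) \<le> (\<integral>h. ln (enn2real (RN_deriv \<mu> \<rho> h)) \<partial>\<rho>) + ln K"
proof -
  interpret mu: prob_space \<mu> by (rule mu)
  interpret rho: prob_space \<rho> by (rule rho)
  define r where "r = RN_deriv \<mu> \<rho>"
  define rr where "rr h = enn2real (r h)" for h
  have rm[measurable]: "r \<in> borel_measurable \<mu>" unfolding r_def by (rule borel_measurable_RN_deriv)
  have fm'[measurable]: "f \<in> borel_measurable \<mu>" by (rule fm)
  have dens: "density \<mu> r = \<rho>" unfolding r_def by (rule mu.density_RN_deriv[OF ac sets])
  have fin: "AE h in \<mu>. r h \<noteq> \<infinity>" unfolding r_def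
    by (rule mu.RN_deriv_finite[OF prob_space_imp_sigma_finite[OF rho] ac sets])
  define Z0 where "Z0 = (\<integral>\<^sup>+h. ennreal (exp (f h)) \<partial>\<mu>)"
  have Z0ne: "Z0 \<noteq> 0"
  proof
    assume "Z0 = 0"
    then have "AE h in \<mu>. ennreal (exp (f h)) = 0" unfolding Z0_def
      by (subst (asm) nn_integral_0_iff_AE) auto
    then have "AE h in \<mu>. False" by simp
    then show False by (simp add: mu.AE_False)
  qed
  have Z0K: "Z0 \<le> ennreal K" using Kb unfolding Z0_def .
  then have "Z0 < \<infinity>" by (simp add: le_less_trans)
  then obtain Z where Z: "Z0 = ennreal Z" "0 \<le> Z" by (cases Z0) auto
  have Zpos: "0 < Z" using Z Z0ne by (cases "Z = 0") auto
  have ZK: "Z \<le> K" using Z0K Z Zpos by (simp add: ennreal_le_iff2)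
  define g where "g h = exp (f h) / rr h" for h
  have gm[measurable]: "g \<in> borel_measurable \<mu>" unfolding g_def rr_def by measurable
  have gmr[measurable]: "g \<in> borel_measurable \<rho>" unfolding measurable_cong_sets[OF sets refl] by (rule gm)
  have g0: "0 \<le> g h" for h unfolding g_def rr_def by simp
  have "(\<integral>\<^sup>+h. ennreal (g h) \<partial>\<rho>) = (\<integral>\<^sup>+h. r h * ennreal (g h) \<partial>\<mu>)"
    unfolding r_def by (rule mu.RN_deriv_nn_integral[OF ac sets]) measurable
  also have "\<dots> \<le> Z0" unfolding Z0_def
    by (intro nn_integral_mono) (simp add: g_def rr_def RN_mult_le)
  finally have gnn: "(\<integral>\<^sup>+h. ennreal (g h) \<partial>\<rho>) \<le> ennreal Z" using Z by simp
  have gi: "integrable \<rho> g"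
    by (rule integrableI_nonneg) (use gnn g0 in \<open>auto simp: le_less_trans\<close>)
  have "ennreal (\<integral>h. g h \<partial>\<rho>) = (\<integral>\<^sup>+h. ennreal (g h) \<partial>\<rho>)"
    by (rule nn_integral_eq_integral[symmetric]) (use gi g0 in auto)
  with gnn have "ennreal (\<integral>h. g h \<partial>\<rho>) \<le> ennreal Z" by simp
  then have gZ: "(\<integral>h. g h \<partial>\<rho>) \<le> Z" using Z(2) by (simp add: ennreal_le_iff)
  have rpos: "AE h in \<rho>. 0 < rr h"
  proof -
    have "AE h in density \<mu> r. 0 < rr h"
      by (subst AE_density[OF rm]) (use fin in \<open>auto simp: rr_def enn2real_positive_iff top.not_eq_extremum elim!: eventually_mono\<close>)
    then show ?thesis unfolding dens .
  qed
  have "(\<integral>h. f h - ln (rr h) \<partial>\<rho>) \<le> (\<integral>h. g h / Z + (ln Z - 1) \<partial>\<rho>)"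
  proof (rule integral_mono_AE)
    show "integrable \<rho> (\<lambda>h. f h - ln (rr h))" using fi iln unfolding rr_def r_def by auto
    show "integrable \<rho> (\<lambda>h. g h / Z + (ln Z - 1))" using gi by auto
    show "AE h in \<rho>. f h - ln (rr h) \<le> g h / Z + (ln Z - 1)"
      using rpos
    proof eventually_elim
      case (elim h)
      have "1 + (f h - ln (rr h) - ln Z) \<le> exp (f h - ln (rr h) - ln Z)" by (rule exp_ge_add_one_self)
      also have "exp (f h - ln (rr h) - ln Z) = g h / Z"
        using elim Zpos by (simp add: exp_diff g_def)
      finally show ?case by simp
    qed
  qed
  also have "\<dots> = (\<integral>h. g h \<partial>\<rho>) / Z + (ln Z - 1)"
    using gi by (simp add: rho.prob_space)
  also have "\<dots> \<le> 1 + (ln Z - 1)" using gZ Zpos by (simp add: divide_le_eq)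
  also have "\<dots> \<le> ln K" using ZK Zpos by simp
  finally have "(\<integral>h. f h - ln (rr h) \<partial>\<rho>) \<le> ln K" by simp
  moreover have "(\<integral>h. f h - ln (rr h) \<partial>\<rho>) = (\<integral>h. f h \<partial>\<rho>) - (\<integral>h. ln (rr h) \<partial>\<rho>)"
    unfolding rr_def r_def by (rule Bochner_Integration.integral_diff[OF fi iln])
  ultimately show ?thesis unfolding rr_def r_def by simp
qed



lemma e_gt_2: "2 < exp (1::real)"
proof -
  have "0 < (\<Sum>n. inverse (fact (n + 2)) * (1::real) ^ (n + 2))"
    by (intro suminf_pos summable_exp[THEN summable_ignore_initial_segment]) auto
  then show ?thesis using exp_first_two_terms[of "1::real"] by simp
qed

lemma final_alg:
  fixes u v w k m V :: real
  assumes "0 < u" "0 < v" "0 < w"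
    and "(u / (w * v)) * \<bar>m\<bar> \<le> k + u\<^sup>2 + (u\<^sup>2 / v\<^sup>2) * V"
  shows "\<bar>m\<bar> \<le> w * (k * (v / u) + V * (u / v) + u * v)"
proof -
  have "\<bar>m\<bar> = (w * v / u) * ((u / (w * v)) * \<bar>m\<bar>)" using assms by (simp add: field_simps)
  also have "\<dots> \<le> (w * v / u) * (k + u\<^sup>2 + (u\<^sup>2 / v\<^sup>2) * V)"
    by (rule mult_left_mono[OF assms(4)]) (use assms in simp)
  also have "\<dots> = w * (k * (v / u) + V * (u / v) + u * v)"
    using assms by (simp add: field_simps power2_eq_square)
  finally show ?thesis .
qed

lemma sum_inv_sq: "summable (\<lambda>n. 1 / (real n + 2)\<^sup>2) \<and> (\<Sum>n. 1 / (real n + 2)\<^sup>2) \<le> 1"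
proof -
  have t: "(\<lambda>n. inverse (real (Suc n)) - inverse (real (Suc (Suc n)))) sums (inverse (real (Suc 0)) - 0)"
    by (rule telescope_sums'[OF LIMSEQ_inverse_real_of_nat])
  have le: "1 / (real n + 2)\<^sup>2 \<le> inverse (real (Suc n)) - inverse (real (Suc (Suc n)))" for n
  proof -
    have "inverse (real (Suc n)) - inverse (real (Suc (Suc n))) = 1 / ((real n + 1) * (real n + 2))"
      by (simp add: field_simps)
    moreover have "1 / (real n + 2)\<^sup>2 \<le> 1 / ((real n + 1) * (real n + 2))"
      unfolding power2_eq_square by (intro divide_left_mono mult_right_mono) auto
    ultimately show ?thesis by simp
  qed
  have s: "summable (\<lambda>n. 1 / (real n + 2)\<^sup>2)"
    by (rule summable_comparison_test'[OF sums_summable[OF t], of 0]) (use le in simp)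
  have "(\<Sum>n. 1 / (real n + 2)\<^sup>2) \<le> (\<Sum>n. inverse (real (Suc n)) - inverse (real (Suc (Suc n))))"
    by (rule suminf_le[OF le s sums_summable[OF t]])
  also have "\<dots> = 1" using sums_unique[OF t] by simp
  finally show ?thesis using s by simp
qed


context pacb
begin

lemma SS_meas_h: "\<omega> \<in> space M \<Longrightarrow> (\<lambda>h. SS t h \<omega>) \<in> borel_measurable H"
  using measurable_compose[OF measurable_Pair2' prod_meas_sum[of X t, OF X_meas]] unfolding SS_def by simp

lemma VV_meas_h: "\<omega> \<in> space M \<Longrightarrow> (\<lambda>h. VV t h \<omega>) \<in> borel_measurable H"
  using measurable_compose[OF measurable_Pair2' prod_meas_sum[of CV t, OF CV_meas]] unfolding VV_def by simp

lemma SS_bound: "h \<in> space H \<Longrightarrow> \<omega> \<in> space M \<Longrightarrow> \<bar>SS t h \<omega>\<bar> \<le> real t * C"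
proof -
  assume h: "h \<in> space H" and \<omega>: "\<omega> \<in> space M"
  have "\<bar>SS t h \<omega>\<bar> \<le> (\<Sum>\<tau> = 1..t. \<bar>X \<tau> h \<omega>\<bar>)" unfolding SS_def by (rule sum_abs)
  also have "\<dots> \<le> (\<Sum>\<tau> = 1..t. C)" by (intro sum_mono) (use X_bound h \<omega> in auto)
  finally show ?thesis by simp
qed

lemma CV_prod_meas:
  assumes "sets N = sets H" "\<tau> \<ge> 1"
  shows "(\<lambda>x. CV \<tau> (fst x) (snd x)) \<in> borel_measurable (N \<Otimes>\<^sub>M M)"
  using meas_congH[OF assms(1) CV_meas[OF assms(2)]] by (simp add: case_prod_beta')

lemma Q_AE:
  assumes N: "prob_space N" "sets N = sets H"
  shows "AE \<omega> in M. AE h in N. \<forall>\<tau>\<in>{1..t}. 0 \<le> CV \<tau> h \<omega> \<and> CV \<tau> h \<omega> \<le> C\<^sup>2"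
proof -
  interpret N: prob_space N by (rule N(1))
  interpret P: pair_sigma_finite N M by unfold_locales
  have sp: "space N = space H" using sets_eq_imp_space_eq[OF N(2)] .
  have "{x \<in> space (N \<Otimes>\<^sub>M M). \<forall>\<tau>\<in>{1..t}. 0 \<le> CV \<tau> (fst x) (snd x) \<and> CV \<tau> (fst x) (snd x) \<le> C\<^sup>2}
      \<in> sets (N \<Otimes>\<^sub>M M)"
  proof (rule sets.sets_Collect_finite_All)
    fix \<tau> assume "\<tau> \<in> {1..t}"
    then have [measurable]: "(\<lambda>x. CV \<tau> (fst x) (snd x)) \<in> borel_measurable (N \<Otimes>\<^sub>M M)"
      using CV_prod_meas[OF N(2)] by auto
    show "{x \<in> space (N \<Otimes>\<^sub>M M). 0 \<le> CV \<tau> (fst x) (snd x) \<and> CV \<tau> (fst x) (snd x) \<le> C\<^sup>2} \<in> sets (N \<Otimes>\<^sub>M M)"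
      by measurable
  qed simp
  moreover have "AE h in N. AE \<omega> in M. \<forall>\<tau>\<in>{1..t}. 0 \<le> CV \<tau> h \<omega> \<and> CV \<tau> h \<omega> \<le> C\<^sup>2"
  proof (rule AE_I2)
    fix h assume "h \<in> space N"
    then have h: "h \<in> space H" using sp by simp
    show "AE \<omega> in M. \<forall>\<tau>\<in>{1..t}. 0 \<le> CV \<tau> h \<omega> \<and> CV \<tau> h \<omega> \<le> C\<^sup>2"
      using CV_cc_AE[OF h, of t] by eventually_elim (simp add: cc_bounds)
  qed
  ultimately show ?thesis
    using P.AE_commute[of "\<lambda>h \<omega>. \<forall>\<tau>\<in>{1..t}. 0 \<le> CV \<tau> h \<omega> \<and> CV \<tau> h \<omega> \<le> C\<^sup>2"] by simp
qed

lemma main: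
  fixes \<delta> :: real and \<mu> :: "nat \<Rightarrow> 'h measure" and Vbar :: "nat \<Rightarrow> real"
  assumes delta: "0 < \<delta>" "\<delta> < 1"
    and mu: "\<And>t. t \<ge> 1 \<Longrightarrow> prob_space (\<mu> t) \<and> sets (\<mu> t) = sets H"
    and Vbar_pos: "\<And>t. t \<ge> 1 \<Longrightarrow> Vbar t > 0"
    and Vbar_cond: "\<And>t. t \<ge> 1 \<Longrightarrow>
        C * sqrt ((2 * ln (real t + 1) + ln (2 / \<delta>)) / ((exp 1 - 2) * Vbar t)) \<le> 1"
  shows "\<exists>E \<in> sets M. measure M E \<ge> 1 - \<delta> \<and>
     (\<forall>\<omega> \<in> E. \<forall>t \<ge> 1. \<forall>\<rho> :: 'h measure. prob_space \<rho> \<and> sets \<rho> = sets H \<longrightarrow>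
        (let L = 2 * ln (real t + 1) + ln (2 / \<delta>);
             M\<rho> = (\<integral>h. (\<Sum>\<tau> = 1..t. X \<tau> h \<omega>) \<partial>\<rho>);
             V\<rho> = (\<integral>h. (\<Sum>\<tau> = 1..t. CV \<tau> h \<omega>) \<partial>\<rho>)
         in ereal \<bar>M\<rho>\<bar> \<le> ereal (sqrt (exp 1 - 2)) *
              (KL \<rho> (\<mu> t) * ereal (sqrt (Vbar t / L))
               + ereal (V\<rho> * sqrt (L / Vbar t) + sqrt (L * Vbar t)))))"
proof -
  define L where "L t = 2 * ln (real t + 1) + ln (2 / \<delta>)" for t :: nat
  define lam where "lam t = sqrt (L t / ((exp 1 - 2) * Vbar t))" for t
  define c where "c t = \<delta> / (2 * (real t + 1)\<^sup>2)" for t :: nat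
  define Phi where "Phi s t \<omega> = (\<integral>\<^sup>+h. ennreal (G (s * lam t) t h \<omega>) \<partial>(\<mu> t))" for s :: real and t \<omega>
  define A where "A s t = {\<omega> \<in> space M. 1 \<le> ennreal (c t) * Phi s t \<omega>}" for s t
  define Q where "Q t \<omega> = (AE h in \<mu> t. \<forall>\<tau>\<in>{1..t}. 0 \<le> CV \<tau> h \<omega> \<and> CV \<tau> h \<omega> \<le> C\<^sup>2)" for t \<omega>
  have e2: "0 < exp 1 - (2::real)" using e_gt_2 by simp
  have Lpos: "0 < L t" for t
  proof -
    have "0 \<le> ln (real t + 1)" by simp
    moreover have "0 < ln (2 / \<delta>)" using delta by simp
    ultimately show ?thesis unfolding L_def by linarith
  qed
  have lam0: "0 \<le> lam t" if "t \<ge> 1" for t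
    unfolding lam_def using Lpos[of t] Vbar_pos[OF that] e2 by simp
  have lamC: "\<bar>s * lam t\<bar> * C \<le> 1" if "t \<ge> 1" "\<bar>s\<bar> = 1" for s t
    using Vbar_cond[OF that(1)] lam0[OF that(1)] that(2) unfolding lam_def L_def by (simp add: abs_mult mult.commute)
  have cpos: "0 < c t" for t unfolding c_def using delta by simp
  have A_meas: "A s t \<in> sets M" if "t \<ge> 1" for s t
  proof -
    have [measurable]: "Phi s t \<in> borel_measurable M"
      unfolding Phi_def using Phi_meas[of "\<mu> t"] mu[OF that] by auto
    show ?thesis unfolding A_def by measurable
  qed
  have A_le: "emeasure M (A s t) \<le> ennreal (c t)" if "t \<ge> 1" "\<bar>s\<bar> = 1" for s t
  proof -
    have [measurable]: "Phi s t \<in> borel_measurable M"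
      unfolding Phi_def using Phi_meas[of "\<mu> t"] mu[OF that(1)] by auto
    have "emeasure M (A s t) \<le> ennreal (c t) * (\<integral>\<^sup>+\<omega>. Phi s t \<omega> * indicator (space M) \<omega> \<partial>M)"
      unfolding A_def by (rule nn_integral_Markov_inequality) auto
    also have "(\<integral>\<^sup>+\<omega>. Phi s t \<omega> * indicator (space M) \<omega> \<partial>M) = (\<integral>\<^sup>+\<omega>. Phi s t \<omega> \<partial>M)"
      by (intro nn_integral_cong) auto
    finally have m1: "emeasure M (A s t) \<le> ennreal (c t) * (\<integral>\<^sup>+\<omega>. Phi s t \<omega> \<partial>M)" .
    have "(\<integral>\<^sup>+\<omega>. Phi s t \<omega> \<partial>M) \<le> 1" unfolding Phi_def
      using fubini_bound[of "\<mu> t" "s * lam t" t] mu[OF that(1)] lamC[OF that] by auto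
    then have "ennreal (c t) * (\<integral>\<^sup>+\<omega>. Phi s t \<omega> \<partial>M) \<le> ennreal (c t) * 1"
      by (rule mult_left_mono) auto
    with m1 show ?thesis by simp
  qed
  have "\<forall>t. \<exists>Nt. t \<ge> 1 \<longrightarrow> ({\<omega>\<in>space M. \<not> Q t \<omega>} \<subseteq> Nt \<and> emeasure M Nt = 0 \<and> Nt \<in> sets M)"
  proof
    fix t :: nat
    show "\<exists>Nt. t \<ge> 1 \<longrightarrow> ({\<omega>\<in>space M. \<not> Q t \<omega>} \<subseteq> Nt \<and> emeasure M Nt = 0 \<and> Nt \<in> sets M)"
    proof (cases "t \<ge> 1")
      case True
      have "AE \<omega> in M. Q t \<omega>" unfolding Q_def using Q_AE[of "\<mu> t" t] mu[OF True] by auto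
      then obtain Nt where "{\<omega>\<in>space M. \<not> Q t \<omega>} \<subseteq> Nt" "emeasure M Nt = 0" "Nt \<in> sets M"
        by (rule AE_E)
      then show ?thesis by blast
    qed auto
  qed
  then obtain N where N: "\<And>t. t \<ge> 1 \<Longrightarrow> {\<omega>\<in>space M. \<not> Q t \<omega>} \<subseteq> N t \<and> emeasure M (N t) = 0 \<and> N t \<in> sets M"
    unfolding choice_iff by blast
  define B where "B = (\<Union>n. A 1 (Suc n)) \<union> (\<Union>n. A (-1) (Suc n)) \<union> (\<Union>n. N (Suc n))"
  define E where "E = space M - B"
  have A': "A s (Suc n) \<in> sets M" for s n using A_meas by simp
  have N': "N (Suc n) \<in> sets M" for n using N by simp
  have B_sets: "B \<in> sets M" unfolding B_def
    by (intro sets.Un sets.countable_UN) (auto simp: A' N')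
  have E_sets: "E \<in> sets M" unfolding E_def using B_sets by auto
  have csum: "(\<Sum>n. ennreal (c (Suc n))) \<le> ennreal (\<delta> / 2)"
  proof -
    have ceq: "c (Suc n) = \<delta> / 2 * (1 / (real n + 2)\<^sup>2)" for n
      unfolding c_def by (simp add: field_simps)
    have s: "summable (\<lambda>n. c (Suc n))" unfolding ceq using sum_inv_sq by (intro summable_mult) auto
    have "(\<Sum>n. ennreal (c (Suc n))) = ennreal (\<Sum>n. c (Suc n))"
      by (rule suminf_ennreal2) (use cpos s in \<open>auto intro: less_imp_le\<close>)
    also have "(\<Sum>n. c (Suc n)) = \<delta> / 2 * (\<Sum>n. 1 / (real n + 2)\<^sup>2)"
      unfolding ceq using sum_inv_sq by (intro suminf_mult) auto
    also have "\<dots> \<le> \<delta> / 2" using sum_inv_sq delta by (simp add: mult_left_le)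
    finally show ?thesis by (simp add: ennreal_leI)
  qed
  have Abound: "emeasure M (\<Union>n. A s (Suc n)) \<le> ennreal (\<delta> / 2)" if "\<bar>s\<bar> = 1" for s
  proof -
    have "emeasure M (\<Union>n. A s (Suc n)) \<le> (\<Sum>n. emeasure M (A s (Suc n)))"
      by (rule emeasure_subadditive_countably) (use A_meas in auto)
    also have "\<dots> \<le> (\<Sum>n. ennreal (c (Suc n)))"
      by (intro suminf_le A_le that) auto
    also have "\<dots> \<le> ennreal (\<delta> / 2)" by (rule csum)
    finally show ?thesis .
  qed
  have Nbound: "emeasure M (\<Union>n. N (Suc n)) \<le> 0"
  proof -
    have "emeasure M (\<Union>n. N (Suc n)) \<le> (\<Sum>n. emeasure M (N (Suc n)))"
      by (rule emeasure_subadditive_countably) (use N in auto)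
    also have "\<dots> = 0" using N by simp
    finally show ?thesis .
  qed
  have "emeasure M B \<le> emeasure M ((\<Union>n. A 1 (Suc n)) \<union> (\<Union>n. A (-1) (Suc n))) + emeasure M (\<Union>n. N (Suc n))"
    unfolding B_def by (rule emeasure_subadditive) (use A_meas N in auto)
  also have "\<dots> \<le> (emeasure M (\<Union>n. A 1 (Suc n)) + emeasure M (\<Union>n. A (-1) (Suc n))) + 0"
    by (intro add_mono emeasure_subadditive Nbound) (use A_meas in auto)
  also have "\<dots> \<le> ennreal (\<delta> / 2) + ennreal (\<delta> / 2) + 0"
    by (intro add_mono Abound) auto
  also have "\<dots> = ennreal \<delta>" using delta by (simp flip: ennreal_plus)
  finally have "emeasure M B \<le> ennreal \<delta>" .
  then have "measure M B \<le> \<delta>" unfolding measure_def using delta by (intro enn2real_leI) auto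
  then have measE: "measure M E \<ge> 1 - \<delta>" unfolding E_def using prob_compl[OF B_sets] by simp
  show ?thesis
  proof (intro bexI[OF _ E_sets] conjI measE ballI allI impI)
    fix \<omega> and t :: nat and \<rho> :: "'h measure"
    assume \<omega>E: "\<omega> \<in> E" and t: "t \<ge> 1" and \<rho>: "prob_space \<rho> \<and> sets \<rho> = sets H"
    show "let L = 2 * ln (real t + 1) + ln (2 / \<delta>);
             M\<rho> = (\<integral>h. (\<Sum>\<tau> = 1..t. X \<tau> h \<omega>) \<partial>\<rho>);
             V\<rho> = (\<integral>h. (\<Sum>\<tau> = 1..t. CV \<tau> h \<omega>) \<partial>\<rho>)
         in ereal \<bar>M\<rho>\<bar> \<le> ereal (sqrt (exp 1 - 2)) *
              (KL \<rho> (\<mu> t) * ereal (sqrt (Vbar t / L))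
               + ereal (V\<rho> * sqrt (L / Vbar t) + sqrt (L * Vbar t)))"
    proof -
      have \<omega>M: "\<omega> \<in> space M" using \<omega>E unfolding E_def by auto
      obtain n where tn: "t = Suc n" using t by (cases t) auto
      have nA: "\<not> (1 \<le> ennreal (c t) * Phi s t \<omega>)" if "s = 1 \<or> s = -1" for s
        using \<omega>E \<omega>M that unfolding E_def B_def A_def tn by auto
      have Qt: "Q t \<omega>" using N[OF t] \<omega>E \<omega>M unfolding E_def B_def tn by auto
      have rho: "prob_space \<rho>" and s\<rho>: "sets \<rho> = sets H" using \<rho> by auto
      have mut: "prob_space (\<mu> t)" and smu: "sets (\<mu> t) = sets H" using mu[OF t] by auto
      have s\<rho>\<mu>: "sets \<rho> = sets (\<mu> t)" using s\<rho> smu by simp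
      interpret rho: prob_space \<rho> by (rule rho)
      have sp\<rho>: "space \<rho> = space H" using sets_eq_imp_space_eq[OF s\<rho>] .
      have Lt: "0 < L t" by (rule Lpos)
      have Vt: "0 < Vbar t" by (rule Vbar_pos[OF t])
      define u where "u = sqrt (L t)"
      define v where "v = sqrt (Vbar t)"
      define w where "w = sqrt (exp 1 - 2)"
      have u0: "0 < u" unfolding u_def using Lt by simp
      have v0: "0 < v" unfolding v_def using Vt by simp
      have w0: "0 < w" unfolding w_def using e2 by simp
      have r1: "sqrt (Vbar t / L t) = v / u" unfolding u_def v_def by (simp add: real_sqrt_divide)
      have r2: "sqrt (L t / Vbar t) = u / v" unfolding u_def v_def by (simp add: real_sqrt_divide)
      have r3: "sqrt (L t * Vbar t) = u * v" unfolding u_def v_def by (simp add: real_sqrt_mult)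
      have r4: "lam t = u / (w * v)" unfolding lam_def u_def v_def w_def by (simp add: real_sqrt_divide real_sqrt_mult)
      have r5: "L t = u\<^sup>2" unfolding u_def using Lt by simp
      have r6: "(exp 1 - 2) * (lam t)\<^sup>2 = u\<^sup>2 / v\<^sup>2"
      proof -
        have "(lam t)\<^sup>2 = L t / ((exp 1 - 2) * Vbar t)" unfolding lam_def using Lt Vt e2 by simp
        then show ?thesis unfolding u_def v_def using Lt Vt e2 by simp
      qed
      have SSm: "(\<lambda>h. SS t h \<omega>) \<in> borel_measurable \<rho>"
        unfolding measurable_cong_sets[OF s\<rho> refl] by (rule SS_meas_h[OF \<omega>M])
      have VVm: "(\<lambda>h. VV t h \<omega>) \<in> borel_measurable \<rho>"
        unfolding measurable_cong_sets[OF s\<rho> refl] by (rule VV_meas_h[OF \<omega>M])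
      have SSmu: "(\<lambda>h. SS t h \<omega>) \<in> borel_measurable (\<mu> t)"
        unfolding measurable_cong_sets[OF smu refl] by (rule SS_meas_h[OF \<omega>M])
      have VVmu: "(\<lambda>h. VV t h \<omega>) \<in> borel_measurable (\<mu> t)"
        unfolding measurable_cong_sets[OF smu refl] by (rule VV_meas_h[OF \<omega>M])
      have iS: "integrable \<rho> (\<lambda>h. SS t h \<omega>)"
        by (rule rho.integrable_const_bound[where B="real t * C"]) (use SS_bound \<omega>M SSm sp\<rho> in auto)
      have goal_eq: "?thesis \<longleftrightarrow> ereal \<bar>\<integral>h. SS t h \<omega> \<partial>\<rho>\<bar> \<le> ereal w *
              (KL \<rho> (\<mu> t) * ereal (v / u) + ereal ((\<integral>h. VV t h \<omega> \<partial>\<rho>) * (u / v) + u * v))"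
        unfolding Let_def SS_def VV_def L_def[symmetric] w_def[symmetric] r1 r2 r3 by simp
      show ?thesis
      proof (cases "absolutely_continuous (\<mu> t) \<rho> \<and> integrable \<rho> (\<lambda>h. ln (enn2real (RN_deriv (\<mu> t) \<rho> h)))")
        case False
        then have "KL \<rho> (\<mu> t) = \<infinity>" unfolding KL_def by auto
        then show ?thesis unfolding goal_eq using u0 v0 w0 by simp
      next
        case True
        then have AC: "absolutely_continuous (\<mu> t) \<rho>"
          and iln: "integrable \<rho> (\<lambda>h. ln (enn2real (RN_deriv (\<mu> t) \<rho> h)))" by auto
        define kk where "kk = (\<integral>h. ln (enn2real (RN_deriv (\<mu> t) \<rho> h)) \<partial>\<rho>)"
        have KLk: "KL \<rho> (\<mu> t) = ereal kk" unfolding KL_def kk_def using True by simp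
        have "AE h in \<mu> t. \<forall>\<tau>\<in>{1..t}. 0 \<le> CV \<tau> h \<omega> \<and> CV \<tau> h \<omega> \<le> C\<^sup>2" using Qt unfolding Q_def .
        then have "AE h in \<rho>. \<forall>\<tau>\<in>{1..t}. 0 \<le> CV \<tau> h \<omega> \<and> CV \<tau> h \<omega> \<le> C\<^sup>2"
          by (rule absolutely_continuous_AE[OF s\<rho>\<mu> AC])
        then have "AE h in \<rho>. norm (VV t h \<omega>) \<le> real t * C\<^sup>2"
        proof eventually_elim
          case (elim h)
          have "\<bar>VV t h \<omega>\<bar> \<le> (\<Sum>\<tau> = 1..t. \<bar>CV \<tau> h \<omega>\<bar>)" unfolding VV_def by (rule sum_abs)
          also have "\<dots> \<le> (\<Sum>\<tau> = 1..t. C\<^sup>2)" by (intro sum_mono) (use elim in auto)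
          finally show ?case by simp
        qed
        then have iV: "integrable \<rho> (\<lambda>h. VV t h \<omega>)"
          by (rule rho.integrable_const_bound[OF _ VVm])
        have key: "s * lam t * (\<integral>h. SS t h \<omega> \<partial>\<rho>) - (exp 1 - 2) * (lam t)\<^sup>2 * (\<integral>h. VV t h \<omega> \<partial>\<rho>) \<le> kk + L t"
          if s: "s = 1 \<or> s = -1" for s
        proof -
          define f where "f h = (s * lam t) * SS t h \<omega> - (exp 1 - 2) * (s * lam t)\<^sup>2 * VV t h \<omega>" for h
          have fm: "f \<in> borel_measurable (\<mu> t)" unfolding f_def using SSmu VVmu by measurable
          have fi: "integrable \<rho> f" unfolding f_def using iS iV by auto
          have fint: "(\<integral>h. f h \<partial>\<rho>) = s * lam t * (\<integral>h. SS t h \<omega> \<partial>\<rho>) - (exp 1 - 2) * (lam t)\<^sup>2 * (\<integral>h. VV t h \<omega> \<partial>\<rho>)"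
            unfolding f_def using iS iV s by (auto simp: power_mult_distrib)
          have Phi_eq: "(\<integral>\<^sup>+h. ennreal (exp (f h)) \<partial>\<mu> t) = Phi s t \<omega>"
            unfolding Phi_def f_def G_def by simp
          have "Phi s t \<omega> \<le> ennreal (1 / c t)"
          proof (cases "Phi s t \<omega>")
            case (real p)
            then have "ennreal (c t * p) < 1" using nA[OF s] cpos[of t] by (simp add: ennreal_mult not_le)
            then have "c t * p < 1" by (simp add: ennreal_less_iff)
            then have "p \<le> 1 / c t" using cpos[of t] by (simp add: field_simps)
            then show ?thesis using real by (simp add: ennreal_leI)
          next
            case top
            then show ?thesis using nA[OF s] cpos[of t] by (simp add: ennreal_mult_top)
          qed
          then have Kb: "(\<integral>\<^sup>+h. ennreal (exp (f h)) \<partial>\<mu> t) \<le> ennreal (1 / c t)" using Phi_eq by simp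
          have "(\<integral>h. f h \<partial>\<rho>) \<le> kk + ln (1 / c t)"
            unfolding kk_def by (rule DV[OF mut rho s\<rho>\<mu> AC iln fm fi Kb])
          moreover have "ln (1 / c t) = L t"
          proof -
            have "1 / c t = 2 / \<delta> * (real t + 1) ^ 2" unfolding c_def by simp
            then have "ln (1 / c t) = ln (2 / \<delta> * (real t + 1) ^ 2)" by (simp only:)
            also have "\<dots> = ln (2 / \<delta>) + ln ((real t + 1) ^ 2)"
              by (rule ln_mult_pos) (use delta in auto)
            also have "ln ((real t + 1) ^ 2) = 2 * ln (real t + 1)" by (simp add: ln_realpow)
            finally show ?thesis unfolding L_def by simp
          qed
          ultimately show ?thesis using fint by simp
        qed
        define Mr where "Mr = (\<integral>h. SS t h \<omega> \<partial>\<rho>)"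
        define Vr where "Vr = (\<integral>h. VV t h \<omega> \<partial>\<rho>)"
        have "lam t * \<bar>Mr\<bar> \<le> kk + L t + (exp 1 - 2) * (lam t)\<^sup>2 * Vr"
          using key[of 1] key[of "-1"] unfolding Mr_def[symmetric] Vr_def[symmetric]
          by (cases "Mr \<ge> 0") (auto simp: abs_if)
        then have "(u / (w * v)) * \<bar>Mr\<bar> \<le> kk + u\<^sup>2 + (u\<^sup>2 / v\<^sup>2) * Vr"
          unfolding r4[symmetric] r5 r6[symmetric] by (simp add: mult.assoc)
        from final_alg[OF u0 v0 w0 this]
        have "\<bar>Mr\<bar> \<le> w * (kk * (v / u) + Vr * (u / v) + u * v)" .
        then show ?thesis by (subst goal_eq) (simp add: KLk Mr_def Vr_def add.assoc)
      qed
    qed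
  qed
qed

end
theorem theorem1:
  fixes M :: "'a measure" and H :: "'h measure"
    and X :: "nat \<Rightarrow> 'h \<Rightarrow> 'a \<Rightarrow> real"
    and CV :: "nat \<Rightarrow> 'h \<Rightarrow> 'a \<Rightarrow> real"
    and C \<delta> :: real
    and \<mu> :: "nat \<Rightarrow> 'h measure"
    and Vbar :: "nat \<Rightarrow> real"
  assumes prob: "prob_space M"
    and X_meas: "\<And>t. t \<ge> 1 \<Longrightarrow> (\<lambda>(h, \<omega>). X t h \<omega>) \<in> borel_measurable (H \<Otimes>\<^sub>M M)"
    and X_bound: "\<And>t h \<omega>. t \<ge> 1 \<Longrightarrow> h \<in> space H \<Longrightarrow> \<omega> \<in> space M \<Longrightarrow> \<bar>X t h \<omega>\<bar> \<le> C"
    and X_mart: "\<And>t h. t \<ge> 1 \<Longrightarrow> h \<in> space H \<Longrightarrow>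
        AE \<omega> in M. real_cond_exp M (obs_filtration M H X (t - 1)) (X t h) \<omega> = 0"
    and CV_meas: "\<And>t. t \<ge> 1 \<Longrightarrow> (\<lambda>(h, \<omega>). CV t h \<omega>) \<in> borel_measurable (H \<Otimes>\<^sub>M M)"
    and CV_version: "\<And>t h. t \<ge> 1 \<Longrightarrow> h \<in> space H \<Longrightarrow>
        AE \<omega> in M. CV t h \<omega> =
          real_cond_exp M (obs_filtration M H X (t - 1)) (\<lambda>\<omega>. (X t h \<omega>)\<^sup>2) \<omega>"
    and delta: "0 < \<delta>" "\<delta> < 1"
    and mu: "\<And>t. t \<ge> 1 \<Longrightarrow> prob_space (\<mu> t) \<and> sets (\<mu> t) = sets H"
    and Vbar_pos: "\<And>t. t \<ge> 1 \<Longrightarrow> Vbar t > 0"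
    and Vbar_cond: "\<And>t. t \<ge> 1 \<Longrightarrow>
        C * sqrt ((2 * ln (real t + 1) + ln (2 / \<delta>)) / ((exp 1 - 2) * Vbar t)) \<le> 1"
  shows "\<exists>E \<in> sets M. measure M E \<ge> 1 - \<delta> \<and>
     (\<forall>\<omega> \<in> E. \<forall>t \<ge> 1. \<forall>\<rho> :: 'h measure. prob_space \<rho> \<and> sets \<rho> = sets H \<longrightarrow>
        (let L = 2 * ln (real t + 1) + ln (2 / \<delta>);
             M\<rho> = (\<integral>h. (\<Sum>\<tau> = 1..t. X \<tau> h \<omega>) \<partial>\<rho>);
             V\<rho> = (\<integral>h. (\<Sum>\<tau> = 1..t. CV \<tau> h \<omega>) \<partial>\<rho>)
         in ereal \<bar>M\<rho>\<bar> \<le> ereal (sqrt (exp 1 - 2)) *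
              (KL \<rho> (\<mu> t) * ereal (sqrt (Vbar t / L))
               + ereal (V\<rho> * sqrt (L / Vbar t) + sqrt (L * Vbar t)))))"
  proof -
  interpret pacb M H X CV C
    using prob X_meas X_bound X_mart CV_meas CV_version by (simp add: pacb_def pacb_axioms_def)
  show ?thesis by (rule main[OF delta mu Vbar_pos Vbar_cond])
qed

end
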